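(* Let $h$ be a hospital whose utility is proportional to total wage, i.e. $f_h(Y)=\gamma_h w_h(Y)$ for all $Y\subseteq X_h$ for some $\gamma_h>0$. Define $\mathrm{Ch}_h:2^{X_h}\to2^{X_h}$ as follows: given $X'\subseteq X_h$ (with $\mathrm{Ch}_h(\emptyset)=\emptyset$), sort $X'$ in non-decreasing order of wage (ties broken by a fixed order) as $x^{(1)},\dots,x^{(|X'|)}$; set $Y=\{x^{(|X'|)}\}$; for $i=1,\dots,|X'|-1$ add $x^{(i)}$ to $Y$ if $w_h(Y\cup\{x^{(i)}\})<1.5\,B_h$; return $Y$. Then $\mathrm{Ch}_h$ satisfies SUB, IRC and COM.
   Context: Hospital $h$ has a finite set $X_h$ of contracts $x$ with wages $x_W$, $0<x_W\le B_h$, where $B_h>0$ is its budget. $w_h(Y)=\sum_{x\in Y}x_W$ for $Y\subseteq X_h$. For $\mathrm{Ch}_h$ with $\mathrm{Ch}_h(Y)\subseteq Y$: SUB means for all $Y''\subseteq Y'\subseteq X_h$, $Y''\setminus\mathrm{Ch}_h(Y'')\subseteq Y'\setminus\mathrm{Ch}_h(Y')$; IRC means for $Y'\subseteq X_h$, $Y''\subseteq X_h\setminus Y'$, if $\mathrm{Ch}_h(Y'\cup Y'')\subseteq Y'$ then $\mathrm{Ch}_h(Y')=\mathrm{Ch}_h(Y'\cup Y'')$; COM means for all $Y''\subseteq Y'\subseteq X_h$ with $w_h(Y'')\le\max\{B_h,w_h(\mathrm{Ch}_h(Y'))\}$, $f_h(\mathrm{Ch}_h(Y'))\ge f_h(Y'')$.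 *)

theory Defs
  imports Complex_Main "HOL-Library.Product_Lexorder"
begin

text \<open>Contracts have type 'a; the type's linear order is the fixed tie-breaking order.
  w x is the wage of contract x.\<close>

definition wsum :: "('a \<Rightarrow> real) \<Rightarrow> 'a set \<Rightarrow> real" where
  "wsum w Y = (\<Sum>x\<in>Y. w x)"

fun greedy :: "('a \<Rightarrow> real) \<Rightarrow> real \<Rightarrow> 'a set \<Rightarrow> 'a list \<Rightarrow> 'a set" where
  "greedy w B Y [] = Y"
| "greedy w B Y (x # xs) =
     greedy w B (if wsum w (Y \<union> {x}) < 3/2 * B then Y \<union> {x} else Y) xs"

definition sorted_by_wage :: "('a::linorder \<Rightarrow> real) \<Rightarrow> 'a set \<Rightarrow> 'a list" where
  "sorted_by_wage w X' = sort_key (\<lambda>x. (w x, x)) (sorted_list_of_set X')"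

definition ch :: "('a::linorder \<Rightarrow> real) \<Rightarrow> real \<Rightarrow> 'a set \<Rightarrow> 'a set" where
  "ch w B X' = (if X' = {} then {}
     else (let xs = sorted_by_wage w X' in greedy w B {last xs} (butlast xs)))"

definition SUB :: "'a set \<Rightarrow> ('a set \<Rightarrow> 'a set) \<Rightarrow> bool" where
  "SUB X C = (\<forall>Y' Y''. Y'' \<subseteq> Y' \<and> Y' \<subseteq> X \<longrightarrow> Y'' - C Y'' \<subseteq> Y' - C Y')"

definition IRC :: "'a set \<Rightarrow> ('a set \<Rightarrow> 'a set) \<Rightarrow> bool" where
  "IRC X C = (\<forall>Y' Y''. Y' \<subseteq> X \<and> Y'' \<subseteq> X - Y' \<and> C (Y' \<union> Y'') \<subseteq> Y'
       \<longrightarrow> C Y' = C (Y' \<union> Y''))"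

definition COM :: "'a set \<Rightarrow> real \<Rightarrow> ('a \<Rightarrow> real) \<Rightarrow> ('a set \<Rightarrow> real) \<Rightarrow> ('a set \<Rightarrow> 'a set) \<Rightarrow> bool" where
  "COM X B w f C = (\<forall>Y' Y''. Y'' \<subseteq> Y' \<and> Y' \<subseteq> X \<and> wsum w Y'' \<le> max B (wsum w (C Y'))
       \<longrightarrow> f (C Y') \<ge> f Y'')"

end

theory Submission
  imports Defs
begin

definition rk :: "('a \<Rightarrow> real) \<Rightarrow> 'a \<Rightarrow> real \<times> 'a" where
  "rk w x = (w x, x)"

lemma rk_inj: "rk w x = rk w y \<Longrightarrow> x = y"
  by (simp add: rk_def)

lemma rk_le_w: "rk w x \<le> rk w y \<Longrightarrow> w x \<le> w y"
  by (auto simp: rk_def less_eq_prod_def)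

lemma w_less_rk: "w x < w y \<Longrightarrow> rk w x < rk w y"
  by (auto simp: rk_def less_prod_def less_eq_prod_def)

lemma wsum_mono:
  assumes "finite B" "A \<subseteq> B" "\<forall>x\<in>B. 0 \<le> w x"
  shows "wsum w A \<le> wsum w B"
  unfolding wsum_def using assms by (intro sum_mono2) auto

lemma greedy_char:
  fixes w :: "'a::linorder \<Rightarrow> real"
  assumes "finite Y" "sorted_wrt (\<lambda>a b. rk w a < rk w b) xs" "set xs \<inter> Y = {}"
    "\<forall>x \<in> Y \<union> set xs. 0 \<le> w x"
  shows "greedy w B Y xs = Y \<union> {x \<in> set xs. wsum w (Y \<union> {y \<in> set xs. rk w y \<le> rk w x}) < 3/2*B}"
  using assms
proof (induction xs arbitrary: Y)
  case Nil
  then show ?case by simp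
next
  case (Cons x xs)
  have xs_gt: "\<forall>z\<in>set xs. rk w x < rk w z" using Cons.prems(2) by simp
  have xnY: "x \<notin> Y" using Cons.prems(3) by auto
  have setx: "{y \<in> set (x#xs). rk w y \<le> rk w x} = {x}"
    using xs_gt by (auto simp: not_le[symmetric])
  have setz: "{y \<in> set (x#xs). rk w y \<le> rk w z} = insert x {y \<in> set xs. rk w y \<le> rk w z}"
    if "z \<in> set xs" for z using xs_gt that by (auto intro: less_imp_le)
  show ?case
  proof (cases "wsum w (Y \<union> {x}) < 3/2*B")
    case True
    have IH: "greedy w B (Y \<union> {x}) xs = (Y \<union> {x}) \<union> {z \<in> set xs. wsum w ((Y \<union> {x}) \<union> {y \<in> set xs. rk w y \<le> rk w z}) < 3/2*B}"
      using Cons.prems by (intro Cons.IH) auto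
    show ?thesis using True IH setx setz by auto
  next
    case False
    have IH: "greedy w B Y xs = Y \<union> {z \<in> set xs. wsum w (Y \<union> {y \<in> set xs. rk w y \<le> rk w z}) < 3/2*B}"
      using Cons.prems by (intro Cons.IH) auto
    have big: "3/2*B \<le> wsum w (Y \<union> {y \<in> set xs. rk w y \<le> rk w z})"
      if "z \<in> set xs" for z
    proof -
      have zY: "z \<notin> Y" using that Cons.prems(3) by auto
      have "w x \<le> w z" using xs_gt that rk_le_w less_imp_le by blast
      have "3/2*B \<le> wsum w (Y \<union> {x})" using False by simp
      also have "\<dots> = wsum w Y + w x" using xnY Cons.prems(1) by (simp add: wsum_def)
      also have "\<dots> \<le> wsum w Y + w z" using \<open>w x \<le> w z\<close> by simp
      also have "\<dots> = wsum w (insert z Y)" using zY Cons.prems(1) by (simp add: wsum_def)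
      also have "\<dots> \<le> wsum w (Y \<union> {y \<in> set xs. rk w y \<le> rk w z})"
        using Cons.prems that by (intro wsum_mono) auto
      finally show ?thesis .
    qed
    have big2: "3/2*B \<le> wsum w (Y \<union> {y \<in> set (x#xs). rk w y \<le> rk w z})"
      if "z \<in> set xs" for z
    proof -
      have "3/2*B \<le> wsum w (Y \<union> {y \<in> set xs. rk w y \<le> rk w z})" using big that .
      also have "\<dots> \<le> wsum w (Y \<union> {y \<in> set (x#xs). rk w y \<le> rk w z})"
        using Cons.prems that by (intro wsum_mono) auto
      finally show ?thesis .
    qed
    have e1: "{z \<in> set (x#xs). wsum w (Y \<union> {y \<in> set (x#xs). rk w y \<le> rk w z}) < 3/2*B} = {}"
      using big2 False setx by (auto simp: not_less[symmetric])
    have e2: "{z \<in> set xs. wsum w (Y \<union> {y \<in> set xs. rk w y \<le> rk w z}) < 3/2*B} = {}"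
      using big by (auto simp: not_less[symmetric])
    have "greedy w B Y (x#xs) = greedy w B Y xs" using False by (simp only: greedy.simps if_False)
    also have "\<dots> = Y" using IH e2 by (simp only: Un_empty_right)
    finally show ?thesis unfolding e1 by (simp only: Un_empty_right)
  qed
qed


lemma ch_char:
  fixes w :: "'a::linorder \<Rightarrow> real"
  assumes fin: "finite Y" and tY: "t \<in> Y" and tmax: "\<forall>y\<in>Y. rk w y \<le> rk w t"
    and pos: "\<forall>y\<in>Y. 0 \<le> w y"
  shows "ch w B Y = insert t {x \<in> Y - {t}. wsum w (insert t {y \<in> Y - {t}. rk w y \<le> rk w x}) < 3/2*B}"
proof -
  define xs where "xs = sorted_by_wage w Y"
  have sk: "xs = sort_key (rk w) (sorted_list_of_set Y)"
    unfolding xs_def sorted_by_wage_def rk_def by simp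
  have setxs: "set xs = Y" using fin by (simp add: sk)
  have dxs: "distinct xs" using fin by (simp add: sk)
  have "sorted (map (rk w) xs)" unfolding sk by (rule sorted_sort_key)
  moreover have "distinct (map (rk w) xs)" using dxs
    by (simp add: distinct_map inj_on_def rk_inj)
  ultimately have "sorted_wrt (<) (map (rk w) xs)" by (simp add: strict_sorted_iff)
  hence srt: "sorted_wrt (\<lambda>a b. rk w a < rk w b) xs" by (simp add: sorted_wrt_map)
  have ne: "xs \<noteq> []" using setxs tY by auto
  have xsd: "xs = butlast xs @ [last xs]" using ne by simp
  have lastmax: "\<forall>y\<in>set (butlast xs). rk w y < rk w (last xs)"
    using srt xsd by (metis list.set_intros(1) sorted_wrt_append)
  have lt: "last xs = t"
  proof (rule ccontr)
    assume "last xs \<noteq> t"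
    hence "t \<in> set (butlast xs)" using tY setxs xsd by (metis Un_iff empty_iff empty_set list.set(2) set_append singletonD)
    hence "rk w t < rk w (last xs)" using lastmax by blast
    moreover have "rk w (last xs) \<le> rk w t" using tmax setxs ne by auto
    ultimately show False by simp
  qed
  have sb: "set (butlast xs) = Y - {t}"
    using dxs xsd setxs lt by (metis Diff_insert_absorb distinct_append empty_set insert_is_Un
        list.simps(15) set_append sup_commute disjoint_iff_not_equal insertI1)
  have srtb: "sorted_wrt (\<lambda>a b. rk w a < rk w b) (butlast xs)"
    using srt xsd by (metis sorted_wrt_append)
  have "ch w B Y = greedy w B {t} (butlast xs)"
    using tY lt unfolding ch_def xs_def[symmetric] by auto
  also have "\<dots> = {t} \<union> {x \<in> set (butlast xs). wsum w ({t} \<union> {y \<in> set (butlast xs). rk w y \<le> rk w x}) < 3/2*B}"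
    using sb pos tY srtb by (intro greedy_char) auto
  finally show ?thesis using sb by simp
qed


lemma ch_mem:
  fixes w :: "'a::linorder \<Rightarrow> real"
  assumes fin: "finite Y" and tY: "t \<in> Y" and tmax: "\<forall>y\<in>Y. rk w y \<le> rk w t"
    and pos: "\<forall>y\<in>Y. 0 \<le> w y"
  shows "x \<in> ch w B Y \<longleftrightarrow> x = t \<or> (x \<in> Y \<and> x \<noteq> t \<and>
           w t + wsum w {y \<in> Y - {t}. rk w y \<le> rk w x} < 3/2*B)"
proof -
  have "wsum w (insert t {y \<in> Y - {t}. rk w y \<le> rk w z}) = w t + wsum w {y \<in> Y - {t}. rk w y \<le> rk w z}" for z
    using fin by (simp add: wsum_def)
  then show ?thesis using ch_char[OF assms, of B] by auto
qed

lemma ex_max: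
  fixes f :: "'a \<Rightarrow> 'b::linorder"
  assumes "finite Y" "Y \<noteq> {}"
  shows "\<exists>t\<in>Y. \<forall>y\<in>Y. f y \<le> f t"
proof -
  have "Max (f ` Y) \<in> f ` Y" using assms by simp
  then obtain t where "t \<in> Y" "f t = Max (f ` Y)" by auto
  then show ?thesis using assms by (metis Max_ge finite_imageI imageI)
qed

lemma ex_min:
  fixes f :: "'a \<Rightarrow> 'b::linorder"
  assumes "finite Y" "Y \<noteq> {}"
  shows "\<exists>t\<in>Y. \<forall>y\<in>Y. f t \<le> f y"
proof -
  have "Min (f ` Y) \<in> f ` Y" using assms by simp
  then obtain t where "t \<in> Y" "f t = Min (f ` Y)" by auto
  then show ?thesis using assms by (metis Min_le finite_imageI imageI)
qed

lemma rk_less_of_le: fixes w :: "'a::linorder \<Rightarrow> real" shows "rk w x \<le> rk w t \<Longrightarrow> x \<noteq> t \<Longrightarrow> rk w x < rk w t"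
  using rk_inj[of w x t] by (metis le_neq_trans)

lemma sub_lemma:
  fixes w :: "'a::linorder \<Rightarrow> real"
  assumes fin: "finite X" and pos: "\<forall>x\<in>X. 0 < w x"
  shows "SUB X (ch w B)"
  unfolding SUB_def
proof (intro allI impI subsetI)
  fix Y' Y'' x
  assume H: "Y'' \<subseteq> Y' \<and> Y' \<subseteq> X" and xin: "x \<in> Y'' - ch w B Y''"
  have YY: "Y'' \<subseteq> Y'" "Y' \<subseteq> X" using H by auto
  have fY': "finite Y'" using YY(2) fin by (rule finite_subset)
  have fY'': "finite Y''" using YY(1) fY' by (rule finite_subset)
  have p': "\<forall>y\<in>Y'. 0 \<le> w y" using YY pos by (meson less_imp_le subsetD)
  have p'': "\<forall>y\<in>Y''. 0 \<le> w y" using YY(1) p' by blast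
  have ne'': "Y'' \<noteq> {}" and ne': "Y' \<noteq> {}" using xin YY by auto
  obtain t'' where t'': "t'' \<in> Y''" "\<forall>y\<in>Y''. rk w y \<le> rk w t''" using ex_max[OF fY'' ne''] by blast
  obtain t' where t': "t' \<in> Y'" "\<forall>y\<in>Y'. rk w y \<le> rk w t'" using ex_max[OF fY' ne'] by blast
  note m'' = ch_mem[OF fY'' t''(1) t''(2) p'', of x B]
  note m' = ch_mem[OF fY' t'(1) t'(2) p', of x B]
  have xY: "x \<in> Y''" and xt: "x \<noteq> t''" and big: "\<not> (w t'' + wsum w {y \<in> Y'' - {t''}. rk w y \<le> rk w x} < 3/2*B)"
    using xin m'' by blast+
  have tt: "rk w t'' \<le> rk w t'" using t'(2) t''(1) YY by blast
  have xlt: "rk w x < rk w t''" using rk_less_of_le t''(2) xY xt by blast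
  have xt': "x \<noteq> t'" using xlt tt by (metis leD)
  have sub: "{y \<in> Y'' - {t''}. rk w y \<le> rk w x} \<subseteq> {y \<in> Y' - {t'}. rk w y \<le> rk w x}"
  proof
    fix y assume y: "y \<in> {y \<in> Y'' - {t''}. rk w y \<le> rk w x}"
    have yx: "rk w y \<le> rk w x" using y by simp
    have "rk w y < rk w t'" using le_less_trans[OF yx less_le_trans[OF xlt tt]] .
    then show "y \<in> {y \<in> Y' - {t'}. rk w y \<le> rk w x}" using y YY by blast
  qed
  have "wsum w {y \<in> Y'' - {t''}. rk w y \<le> rk w x} \<le> wsum w {y \<in> Y' - {t'}. rk w y \<le> rk w x}"
  proof (rule wsum_mono[OF _ sub])
    show "finite {y \<in> Y' - {t'}. rk w y \<le> rk w x}" using fY' by simp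
    show "\<forall>y\<in>{y \<in> Y' - {t'}. rk w y \<le> rk w x}. 0 \<le> w y" using p' by simp
  qed
  moreover have "w t'' \<le> w t'" using tt rk_le_w by blast
  ultimately have "\<not> (w t' + wsum w {y \<in> Y' - {t'}. rk w y \<le> rk w x} < 3/2*B)" using big by linarith
  then show "x \<in> Y' - ch w B Y'" using m' xt' xY YY by blast
qed


lemma wsum_insert: "finite A \<Longrightarrow> z \<notin> A \<Longrightarrow> wsum w (insert z A) = w z + wsum w A"
  by (simp add: wsum_def)

lemma irc_lemma:
  fixes w :: "'a::linorder \<Rightarrow> real"
  assumes fin: "finite X" and pos: "\<forall>x\<in>X. 0 < w x"
  shows "IRC X (ch w B)"
  unfolding IRC_def
proof (intro allI impI)
  fix Y' Y''
  assume H: "Y' \<subseteq> X \<and> Y'' \<subseteq> X - Y' \<and> ch w B (Y' \<union> Y'') \<subseteq> Y'"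
  define U where "U = Y' \<union> Y''"
  have UX: "U \<subseteq> X" using H unfolding U_def by blast
  have chU: "ch w B U \<subseteq> Y'" using H unfolding U_def by blast
  have disj: "Y'' \<inter> Y' = {}" using H by blast
  have fU: "finite U" using UX fin by (rule finite_subset)
  have fY': "finite Y'" using fU unfolding U_def by simp
  have pU: "\<forall>y\<in>U. 0 \<le> w y" using UX pos by (meson less_imp_le subsetD)
  have pY': "\<forall>y\<in>Y'. 0 \<le> w y" using pU unfolding U_def by blast
  show "ch w B Y' = ch w B (Y' \<union> Y'')"
  proof (cases "U = {}")
    case True
    then show ?thesis unfolding U_def by simp
  next
    case False
    obtain t where t: "t \<in> U" "\<forall>y\<in>U. rk w y \<le> rk w t" using ex_max[OF fU False] by blast
    note mU = ch_mem[OF fU t(1) t(2) pU]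
    have tY': "t \<in> Y'" using mU chU by blast
    have tmax': "\<forall>y\<in>Y'. rk w y \<le> rk w t" using t(2) unfolding U_def by blast
    note mY = ch_mem[OF fY' tY' tmax' pY']
    have key: "w t + wsum w {y \<in> U - {t}. rk w y \<le> rk w x} < 3/2*B"
      if xY: "x \<in> Y'" and xt: "x \<noteq> t" and lt: "w t + wsum w {y \<in> Y' - {t}. rk w y \<le> rk w x} < 3/2*B" for x
    proof (rule ccontr)
      assume nlt: "\<not> ?thesis"
      define D where "D = {z \<in> Y''. rk w z \<le> rk w x}"
      show False
      proof (cases "D = {}")
        case True
        have "{y \<in> U - {t}. rk w y \<le> rk w x} = {y \<in> Y' - {t}. rk w y \<le> rk w x}"
          using True unfolding D_def U_def by blast
        then show False using nlt lt by simp
      next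
        case False
        have fD: "finite D" using fU unfolding D_def U_def by simp
        obtain z where z: "z \<in> D" "\<forall>y\<in>D. rk w z \<le> rk w y" using ex_min[OF fD False] by blast
        have zY'': "z \<in> Y''" and zx: "rk w z \<le> rk w x" using z(1) unfolding D_def by simp_all
        have znY': "z \<notin> Y'" using zY'' disj by blast
        have zU: "z \<in> U" using zY'' unfolding U_def by simp
        have zt: "z \<noteq> t" using znY' tY' by blast
        have zrej: "\<not> (w t + wsum w {y \<in> U - {t}. rk w y \<le> rk w z} < 3/2*B)"
          using mU[of z B] chU znY' zt zU by blast
        define A where "A = {y \<in> Y' - {t}. rk w y \<le> rk w z}"
        have zxne: "z \<noteq> x" using znY' xY by blast
        have zltx: "rk w z < rk w x" using zx zxne rk_inj[of w z x] by (metis le_neq_trans)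
        have sub1: "{y \<in> U - {t}. rk w y \<le> rk w z} \<subseteq> insert z A"
        proof
          fix y assume y: "y \<in> {y \<in> U - {t}. rk w y \<le> rk w z}"
          show "y \<in> insert z A"
          proof (cases "y \<in> Y''")
            case True
            have yz: "rk w y \<le> rk w z" using y by simp
            have "y \<in> D" unfolding D_def using True order_trans[OF yz zx] by simp
            hence "rk w z \<le> rk w y" using z(2) by blast
            hence "y = z" using yz rk_inj[of w y z] by (metis order_antisym)
            then show ?thesis by simp
          next
            case False
            then show ?thesis using y unfolding A_def U_def by blast
          qed
        qed
        have fA: "finite A" using fY' unfolding A_def by simp
        have zA: "z \<notin> A" using znY' unfolding A_def by simp
        have xA: "x \<notin> A" using zltx unfolding A_def by (simp add: not_le)
        have sub2: "insert x A \<subseteq> {y \<in> Y' - {t}. rk w y \<le> rk w x}"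
        proof
          fix y assume "y \<in> insert x A"
          then show "y \<in> {y \<in> Y' - {t}. rk w y \<le> rk w x}"
          proof
            assume "y = x" then show ?thesis using xY xt by simp
          next
            assume yA: "y \<in> A"
            have "rk w y \<le> rk w z" using yA unfolding A_def by simp
            then show ?thesis using yA zx unfolding A_def by (simp add: order_trans[OF _ zx])
          qed
        qed
        have pz: "\<forall>y\<in>insert z A. 0 \<le> w y" using pU zU unfolding A_def U_def by blast
        have "wsum w {y \<in> U - {t}. rk w y \<le> rk w z} \<le> wsum w (insert z A)"
          using fA pz sub1 by (intro wsum_mono) auto
        also have "\<dots> = w z + wsum w A" using fA zA by (rule wsum_insert)
        also have "\<dots> \<le> w x + wsum w A" using rk_le_w[OF zx] by simp
        also have "\<dots> = wsum w (insert x A)" using fA xA by (simp add: wsum_insert)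
        also have "\<dots> \<le> wsum w {y \<in> Y' - {t}. rk w y \<le> rk w x}"
        proof (rule wsum_mono[OF _ sub2])
          show "finite {y \<in> Y' - {t}. rk w y \<le> rk w x}" using fY' by simp
          show "\<forall>y\<in>{y \<in> Y' - {t}. rk w y \<le> rk w x}. 0 \<le> w y" using pY' by simp
        qed
        finally show False using zrej lt by linarith
      qed
    qed
    have key2: "w t + wsum w {y \<in> Y' - {t}. rk w y \<le> rk w x} < 3/2*B"
      if "w t + wsum w {y \<in> U - {t}. rk w y \<le> rk w x} < 3/2*B" for x
    proof -
      have "wsum w {y \<in> Y' - {t}. rk w y \<le> rk w x} \<le> wsum w {y \<in> U - {t}. rk w y \<le> rk w x}"
      proof (rule wsum_mono)
        show "finite {y \<in> U - {t}. rk w y \<le> rk w x}" using fU by simp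
        show "{y \<in> Y' - {t}. rk w y \<le> rk w x} \<subseteq> {y \<in> U - {t}. rk w y \<le> rk w x}" unfolding U_def by blast
        show "\<forall>y\<in>{y \<in> U - {t}. rk w y \<le> rk w x}. 0 \<le> w y" using pU by simp
      qed
      then show ?thesis using that by linarith
    qed
    have "x \<in> ch w B Y' \<longleftrightarrow> x \<in> ch w B U" for x
    proof (cases "x \<in> Y'")
      case True
      then show ?thesis using mU[of x B] mY[of x B] key[of x] key2[of x] unfolding U_def by blast
    next
      case False
      have "x \<notin> ch w B U" using chU False by blast
      moreover have "x \<notin> ch w B Y'" using mY[of x B] False tY' by blast
      ultimately show ?thesis by blast
    qed
    then show ?thesis unfolding U_def by blast
  qed
qed


lemma com_core:
  fixes w :: "'a::linorder \<Rightarrow> real"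
  assumes fin: "finite X" and pos: "\<forall>x\<in>X. 0 < w x \<and> w x \<le> B"
    and YY: "Y'' \<subseteq> Y'" "Y' \<subseteq> X" and wle: "wsum w Y'' \<le> max B (wsum w (ch w B Y'))"
  shows "wsum w Y'' \<le> wsum w (ch w B Y')"
proof (cases "Y' = {}")
  case True
  then show ?thesis using YY by (simp add: ch_def wsum_def)
next
  case ne: False
  have fY': "finite Y'" using YY(2) fin by (rule finite_subset)
  have fY'': "finite Y''" using YY(1) fY' by (rule finite_subset)
  have pY': "\<forall>y\<in>Y'. 0 \<le> w y" using YY pos by (meson less_imp_le subsetD)
  obtain t where t: "t \<in> Y'" "\<forall>y\<in>Y'. rk w y \<le> rk w t" using ex_max[OF fY' ne] by blast
  note m = ch_mem[OF fY' t(1) t(2) pY', of _ B]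
  have chsub: "ch w B Y' \<subseteq> Y'"
  proof
    fix x assume "x \<in> ch w B Y'" then show "x \<in> Y'" using m[of x] t(1) by blast
  qed
  have tch: "t \<in> ch w B Y'" using m by blast
  have fch: "finite (ch w B Y')" using chsub fY' by (rule finite_subset)
  show ?thesis
  proof (cases "B \<le> wsum w (ch w B Y') \<or> ch w B Y' = Y'")
    case True
    then show ?thesis
    proof
      assume "B \<le> wsum w (ch w B Y')" then show ?thesis using wle by simp
    next
      assume "ch w B Y' = Y'" then show ?thesis using wsum_mono[OF fY' YY(1) pY'] by simp
    qed
  next
    case False
    have wC: "wsum w (ch w B Y') < B" using False by simp
    define R where "R = Y' - ch w B Y'"
    have Rne: "R \<noteq> {}" using False chsub unfolding R_def by blast
    have fR: "finite R" using fY' unfolding R_def by simp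
    obtain z where z: "z \<in> R" "\<forall>y\<in>R. rk w z \<le> rk w y" using ex_min[OF fR Rne] by blast
    have zY: "z \<in> Y'" and znc: "z \<notin> ch w B Y'" using z(1) unfolding R_def by auto
    have zt: "z \<noteq> t" using znc tch by blast
    define P where "P = {y \<in> Y' - {t}. rk w y \<le> rk w z}"
    have rej: "\<not> (w t + wsum w P < 3/2*B)" using m[of z] znc zY zt unfolding P_def by blast
    have fP: "finite P" using fY' unfolding P_def by simp
    have zP: "z \<in> P" using zY zt unfolding P_def by simp
    have Psub: "P - {z} \<subseteq> ch w B Y' - {t}"
    proof
      fix y assume y: "y \<in> P - {z}"
      have yY: "y \<in> Y'" and yt: "y \<noteq> t" and yz: "rk w y \<le> rk w z" and ynz: "y \<noteq> z"
        using y unfolding P_def by auto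
      have "y \<in> ch w B Y'"
      proof (rule ccontr)
        assume "y \<notin> ch w B Y'"
        hence "y \<in> R" using yY unfolding R_def by simp
        hence "rk w z \<le> rk w y" using z(2) by blast
        hence "y = z" using yz rk_inj[of w y z] by (metis order_antisym)
        then show False using ynz by simp
      qed
      then show "y \<in> ch w B Y' - {t}" using yt by simp
    qed
    have "wsum w P = w z + wsum w (P - {z})"
      using wsum_insert[of "P - {z}" z w] fP zP by (simp add: insert_absorb)
    moreover have "wsum w (P - {z}) \<le> wsum w (ch w B Y' - {t})"
      using wsum_mono[OF _ Psub] fch pY' chsub by blast
    moreover have "wsum w (ch w B Y') = w t + wsum w (ch w B Y' - {t})"
      using wsum_insert[of "ch w B Y' - {t}" t w] fch tch by (simp add: insert_absorb)
    ultimately have wz: "B/2 < w z" using rej wC by linarith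
    have ztle: "w z \<le> w t" using rk_le_w t(2) zY by blast
    define L where "L = {y \<in> Y''. w y \<le> B/2}"
    define Hh where "Hh = {y \<in> Y''. \<not> w y \<le> B/2}"
    have split: "wsum w Y'' = wsum w L + wsum w Hh"
    proof -
      have "Y'' = L \<union> Hh" "L \<inter> Hh = {}" unfolding L_def Hh_def by auto
      moreover have "finite L" "finite Hh" using fY'' unfolding L_def Hh_def by auto
      ultimately show ?thesis unfolding wsum_def by (metis sum.union_disjoint)
    qed
    have Lsub: "L \<subseteq> ch w B Y' - {t}"
    proof
      fix y assume y: "y \<in> L"
      have yY: "y \<in> Y'" and wy: "w y \<le> B/2" using y YY unfolding L_def by auto
      have "rk w y < rk w z" using wy wz by (intro w_less_rk) simp
      hence "y \<notin> R" using z(2) by (meson leD)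
      moreover have "y \<noteq> t" using wy wz ztle by auto
      ultimately show "y \<in> ch w B Y' - {t}" using yY unfolding R_def by blast
    qed
    have pch: "\<forall>y\<in>ch w B Y' - {t}. 0 \<le> w y" using pY' chsub by blast
    have fch': "finite (ch w B Y' - {t})" using fch by simp
    have wL: "wsum w L \<le> wsum w (ch w B Y' - {t})"
      using fch' Lsub pch by (rule wsum_mono)
    have pHh: "\<forall>y\<in>Hh. 0 \<le> w y" using pY' YY unfolding Hh_def by blast
    have fHh: "finite Hh" using fY'' unfolding Hh_def by simp
    have wH: "wsum w Hh \<le> w t"
    proof (cases "Hh = {}")
      case True then show ?thesis using pY' t(1) by (simp add: wsum_def)
    next
      case False
      then obtain a where a: "a \<in> Hh" by blast
      have "Hh = {a}"
      proof (rule ccontr)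
        assume "Hh \<noteq> {a}"
        then obtain b where b: "b \<in> Hh" "b \<noteq> a" using a by blast
        have "w a + w b = wsum w {a, b}" using b(2) by (simp add: wsum_def)
        also have "\<dots> \<le> wsum w Hh" using fHh pHh a b by (intro wsum_mono) simp_all
        also have "\<dots> \<le> wsum w Y''"
        proof -
          have "\<forall>y\<in>L. 0 \<le> w y" using pY' YY unfolding L_def by blast
          hence "0 \<le> wsum w L" unfolding wsum_def by (simp add: sum_nonneg)
          then show ?thesis using split by linarith
        qed
        also have "\<dots> \<le> B" using wle wC by simp
        finally have "w a + w b \<le> B" .
        moreover have "B/2 < w a" "B/2 < w b" using a b unfolding Hh_def by auto
        ultimately show False by simp
      qed
      moreover have "a \<in> Y'" using a YY unfolding Hh_def by blast
      moreover have "w a \<le> w t" using rk_le_w t(2) \<open>a \<in> Y'\<close> by blast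
      ultimately show ?thesis by (simp add: wsum_def)
    qed
    show ?thesis using split wL wH
      \<open>wsum w (ch w B Y') = w t + wsum w (ch w B Y' - {t})\<close> by linarith
  qed
qed


theorem lemma7:
  fixes X :: "'a::linorder set" and w :: "'a \<Rightarrow> real" and B \<gamma> :: real
    and f :: "'a set \<Rightarrow> real"
  assumes "finite X"
    and "B > 0"
    and "\<forall>x\<in>X. 0 < w x \<and> w x \<le> B"
    and "\<gamma> > 0"
    and "\<forall>Y\<subseteq>X. f Y = \<gamma> * wsum w Y"
  shows "SUB X (ch w B) \<and> IRC X (ch w B) \<and> COM X B w f (ch w B)"
proof (intro conjI)
  have pos: "\<forall>x\<in>X. 0 < w x" using assms(3) by blast
  show "SUB X (ch w B)" using sub_lemma[OF assms(1) pos] .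
  show "IRC X (ch w B)" using irc_lemma[OF assms(1) pos] .
  show "COM X B w f (ch w B)"
    unfolding COM_def
  proof (intro allI impI)
    fix Y' Y''
    assume H: "Y'' \<subseteq> Y' \<and> Y' \<subseteq> X \<and> wsum w Y'' \<le> max B (wsum w (ch w B Y'))"
    have le: "wsum w Y'' \<le> wsum w (ch w B Y')"
      using com_core[OF assms(1) assms(3)] H by blast
    have chsub: "ch w B Y' \<subseteq> X"
    proof (cases "Y' = {}")
      case True then show ?thesis by (simp add: ch_def)
    next
      case False
      have fY': "finite Y'" using H assms(1) finite_subset by blast
      have pY': "\<forall>y\<in>Y'. 0 \<le> w y" using H pos by (meson less_imp_le subsetD)
      obtain t where t: "t \<in> Y'" "\<forall>y\<in>Y'. rk w y \<le> rk w t" using ex_max[OF fY' False] by blast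
      note m = ch_mem[OF fY' t(1) t(2) pY', of _ B]
      show ?thesis
      proof
        fix x assume "x \<in> ch w B Y'" then have "x \<in> Y'" using m[of x] t(1) by blast
        then show "x \<in> X" using H by blast
      qed
    qed
    have "f Y'' = \<gamma> * wsum w Y''" using assms(5) H by blast
    moreover have "f (ch w B Y') = \<gamma> * wsum w (ch w B Y')" using assms(5) chsub by blast
    ultimately show "f (ch w B Y') \<ge> f Y''" using le assms(4) by (simp add: mult_left_mono)
  qed
qed

end
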